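(* Let $\Omega = \{-1\} \cup [0,\infty)$, let $E$ be the Banach space of all bounded continuous real functions on $\Omega$ with the supremum norm $\|\cdot\|$, and let $$C = \{ x \in E : 0 \le x(u) \le 1 \text{ for all } u \in \Omega,\ |x(u_1)-x(u_2)| \le |u_1-u_2| \text{ for all } u_1,u_2 \in [0,\infty)\}.$$ For $x \in C$ and $v \ge 0$ put $\alpha_x(v) = \sup\{ x(s) : s \in \{-1\}\cup[v,\infty)\}$. Then: (i) $|\alpha_x(u_1) - \alpha_x(u_2)| \le |u_1 - u_2|$ for all $x \in C$ and $u_1,u_2 \in [0,\infty)$; (ii) $|\alpha_x(u) - \alpha_y(u)| \le \|x-y\|$ for all $x,y \in C$ and $u \in [0,\infty)$. *)

theory Defs
  imports "HOL-Analysis.Analysis"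
begin

text \<open>Omega = {-1} union [0,infinity), as a subset of the reals. Elements of E are
  represented as functions real to real, considered only on Omega.\<close>

definition Omega :: "real set" where
  "Omega = {-1} \<union> {0..}"

definition E_space :: "(real \<Rightarrow> real) set" where
  "E_space = {x. continuous_on Omega x \<and> bounded (x ` Omega)}"

definition supnorm :: "(real \<Rightarrow> real) \<Rightarrow> real" where
  "supnorm x = (SUP u\<in>Omega. \<bar>x u\<bar>)"

definition C_set :: "(real \<Rightarrow> real) set" where
  "C_set = {x \<in> E_space. (\<forall>u\<in>Omega. 0 \<le> x u \<and> x u \<le> 1) \<and>
             (\<forall>u1\<in>{0..}. \<forall>u2\<in>{0..}. \<bar>x u1 - x u2\<bar> \<le> \<bar>u1 - u2\<bar>)}"

definition alpha :: "(real \<Rightarrow> real) \<Rightarrow> real \<Rightarrow> real" where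
  "alpha x v = (SUP s\<in>({-1} \<union> {v..}). x s)"

end

theory Submission
  imports Defs
begin

lemma Cbnd: "x \<in> C_set \<Longrightarrow> s \<in> Omega \<Longrightarrow> 0 \<le> x s \<and> x s \<le> 1"
  unfolding C_set_def by auto

lemma Clip: "x \<in> C_set \<Longrightarrow> (a::real) \<ge> 0 \<Longrightarrow> b \<ge> 0 \<Longrightarrow> \<bar>x a - x b\<bar> \<le> \<bar>a - b\<bar>"
  unfolding C_set_def by auto

lemma sub: "(v::real) \<ge> 0 \<Longrightarrow> {-1} \<union> {v..} \<subseteq> Omega"
  unfolding Omega_def by auto

lemma al_upper: assumes "x \<in> C_set" "v \<ge> 0" "s \<in> {-1} \<union> {v..}"
  shows "x s \<le> alpha x v"
proof -
  have "bdd_above (x ` ({-1} \<union> {v..}))"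
    using Cbnd[OF assms(1)] sub[OF assms(2)] by (intro bdd_aboveI2[where M=1]) blast
  thus ?thesis unfolding alpha_def using assms(3) by (intro cSUP_upper)
qed

lemma al_least: assumes "\<And>s. s \<in> {-1} \<union> {v..} \<Longrightarrow> x s \<le> M"
  shows "alpha x v \<le> M"
  unfolding alpha_def by (rule cSUP_least) (use assms in auto)

lemma part1: assumes "x \<in> C_set" "0 \<le> u1" "u1 \<le> u2"
  shows "\<bar>alpha x u1 - alpha x u2\<bar> \<le> \<bar>u1 - u2\<bar>"
proof -
  have a: "alpha x u2 \<le> alpha x u1"
    by (rule al_least) (use al_upper[OF assms(1,2)] assms in auto)
  have b: "alpha x u1 \<le> alpha x u2 + (u2 - u1)"
  proof (rule al_least)
    fix s assume s: "s \<in> {-1} \<union> {u1..}"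
    show "x s \<le> alpha x u2 + (u2 - u1)"
    proof (cases "s = -1 \<or> s \<ge> u2")
      case True
      hence "x s \<le> alpha x u2" using al_upper[OF assms(1), of u2 s] assms by auto
      thus ?thesis using assms by linarith
    next
      case False
      hence "u1 \<le> s" "s < u2" using s by auto
      hence "\<bar>x s - x u2\<bar> \<le> \<bar>s - u2\<bar>" using Clip[OF assms(1), of s u2] assms by auto
      moreover have "x u2 \<le> alpha x u2" using al_upper[OF assms(1), of u2 u2] assms by auto
      ultimately show ?thesis using \<open>u1 \<le> s\<close> \<open>s < u2\<close> by linarith
    qed
  qed
  show ?thesis using a b assms by linarith
qed

lemma part2: assumes "x \<in> C_set" "y \<in> C_set" "0 \<le> u"
  shows "alpha x u - alpha y u \<le> supnorm (\<lambda>s. x s - y s)"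
proof -
  have bd: "bdd_above ((\<lambda>s. \<bar>x s - y s\<bar>) ` Omega)"
  proof (rule bdd_aboveI2[where M=1])
    fix s assume "s \<in> Omega"
    thus "\<bar>x s - y s\<bar> \<le> 1" using Cbnd[OF assms(1)] Cbnd[OF assms(2)] by (smt (verit))
  qed
  have "alpha x u \<le> alpha y u + supnorm (\<lambda>s. x s - y s)"
  proof (rule al_least)
    fix s assume s: "s \<in> {-1} \<union> {u..}"
    hence so: "s \<in> Omega" using sub[OF assms(3)] by auto
    have "\<bar>x s - y s\<bar> \<le> supnorm (\<lambda>s. x s - y s)"
      unfolding supnorm_def using bd so by (intro cSUP_upper)
    moreover have "y s \<le> alpha y u" using al_upper[OF assms(2,3) s] .
    ultimately show "x s \<le> alpha y u + supnorm (\<lambda>s. x s - y s)" by linarith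
  qed
  thus ?thesis by linarith
qed

theorem lemma2p2:
  shows "(\<forall>x\<in>C_set. \<forall>u1\<in>{0::real..}. \<forall>u2\<in>{0..}.
            \<bar>alpha x u1 - alpha x u2\<bar> \<le> \<bar>u1 - u2\<bar>)
       \<and> (\<forall>x\<in>C_set. \<forall>y\<in>C_set. \<forall>u\<in>{0::real..}.
            \<bar>alpha x u - alpha y u\<bar> \<le> supnorm (\<lambda>s. x s - y s))"
proof (intro conjI ballI)
  fix x u1 u2 assume "x \<in> C_set" "u1 \<in> {0::real..}" "u2 \<in> {0::real..}"
  thus "\<bar>alpha x u1 - alpha x u2\<bar> \<le> \<bar>u1 - u2\<bar>"
    using part1[of x u1 u2] part1[of x u2 u1] by (cases "u1 \<le> u2") (auto simp: abs_minus_commute)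
next
  fix x y u assume h: "x \<in> C_set" "y \<in> C_set" "u \<in> {0::real..}"
  have "supnorm (\<lambda>s. y s - x s) = supnorm (\<lambda>s. x s - y s)"
    unfolding supnorm_def by (simp add: abs_minus_commute)
  thus "\<bar>alpha x u - alpha y u\<bar> \<le> supnorm (\<lambda>s. x s - y s)"
    using part2[of x y u] part2[of y x u] h by auto
qed

end
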